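(* Let $n\geq0$ and $F\in\mathbf{F}(n)$. Then $f_F=\sum_{G\in\mathbf{F}(n),\,G\leq m(F)}\mu(G,m(F))\,G$.
   Context: Let $K$ be a field. Planar rooted trees have their children linearly ordered left to right; a planar forest is a finite, possibly empty, sequence $t_1\cdots t_n$ of planar rooted trees ($1$ = empty forest); $\mathbf{F}(n)$ is the (finite) set of planar forests with $n$ vertices. $\mathcal{H}$ is the free associative unital $K$-algebra on planar rooted trees, with basis the planar forests and product concatenation. $B^+(F)$ is the tree obtained by grafting the trees of $F$ on a new common root; $\varepsilon(F)=\delta_{F,1}$. $\Delta$ is the unique linear map with $\Delta(1)=1\otimes1$, $\Delta(xy)=(x\otimes1)\Delta(y)+\Delta(x)(1\otimes y)-x\otimes y$, $\Delta(B^+(x))=B^+(x)\otimes 1+(\mathrm{Id}\otimes B^+)\Delta(x)$. $\gamma$ is linear with $\gamma(t_1\cdots t_n)=\delta_{t_1,\bullet}t_2\cdots t_n$ ($\bullet$ the one-vertex tree), $\gamma(1)=0$. $\langle-,-\rangle$ is the unique bilinear form with $\langle1,x\rangle=\varepsilon(x)$, $\langle xy,z\rangle=\langle y\otimes x,\Delta(z)\rangle$ (with $\langle a\otimes b,c\otimes d\rangle=\langle a,c\rangle\langle b,d\rangle$), $\langle B^+(x),y\rangle=\langle x,\gamma(y)\rangle$; it is non-degenerate and forests of different weights are orthogonal; $(f_F)$ is the dual basis: $\langle f_F,G\rangle=\delta_{F,G}$ for all forests $G$. $m$ is the map on planar forests defined recursively by $m(1)=1$, $m(B^+(F_1)F_2)=B^+(m(F_2))m(F_1)$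 (it preserves the number of vertices). Order on forests: an admissible transformation chooses a vertex $s$ which is the leftmost child of its parent $u$; if $u$ is not a root, with parent $r$, the subtree rooted at $s$ is moved to become a child of $r$ immediately to the left of $u$; if $u$ is a root, the subtree rooted at $s$ becomes a new tree immediately to the left of the tree of $u$; everything else unchanged. $F\leq G$ iff $G$ is obtained from $F$ by a finite (possibly empty) sequence of admissible transformations; this is a partial order on each $\mathbf{F}(n)$. $\mu:\mathbf{F}(n)^2\to K$ is the Möbius function of the poset $(\mathbf{F}(n),\leq)$: $\mu(F,G)=0$ if $F\not\leq G$, and $\sum_{G:\,F\leq G\leq H}\mu(F,G)=\delta_{F,H}$ whenever $F\leq H$. *)

theory Defs
  imports Main
begin

text \<open>A planar rooted tree is a root with an ordered (left to right) list of
children subtrees; a planar forest is a list of planar trees (empty list = 1).\<close>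

datatype ptree = Node "ptree list"

type_synonym forest = "ptree list"

text \<open>B+ (grafting on a new root) is the constructor Node; the one-vertex tree is Node [].\<close>

primrec nv :: "ptree \<Rightarrow> nat" and nvf :: "forest \<Rightarrow> nat" where
  "nv (Node F) = Suc (nvf F)"
| "nvf [] = 0"
| "nvf (t # F) = nv t + nvf F"

definition forests :: "nat \<Rightarrow> forest set" where
  "forests n = {F. nvf F = n}"

text \<open>Coefficient of A \<otimes> B in Delta(G), computed from the defining rules:
Delta(1) = 1 \<otimes> 1, and for G = t y with t = B+(x) a tree,
Delta(t y) = (t \<otimes> 1) Delta(y) + Delta(t) (1 \<otimes> y) - t \<otimes> y,
Delta(t) = t \<otimes> 1 + (Id \<otimes> B+) Delta(x).\<close>

fun delta :: "forest \<Rightarrow> forest \<Rightarrow> forest \<Rightarrow> 'a::field" where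
  "delta [] A B = (if A = [] \<and> B = [] then 1 else 0)"
| "delta (Node x # y) A B =
     (case A of [] \<Rightarrow> 0 | t' # A' \<Rightarrow> if t' = Node x then delta y A' B else 0)
   + (if length y \<le> length B \<and> drop (length B - length y) B = y then
        (let B' = take (length B - length y) B in
           (if A = [Node x] \<and> B' = [] then 1 else 0)
         + (case B' of [Node C] \<Rightarrow> delta x A C | _ \<Rightarrow> 0))
      else 0)
   - (if A = [Node x] \<and> B = y then 1 else 0)"

text \<open>Pairs of forests whose total number of vertices is w (contains the support
of Delta(G) when G has w vertices).\<close>
definition wpairs :: "nat \<Rightarrow> (forest \<times> forest) set" where
  "wpairs w = {(G1, G2). nvf G1 + nvf G2 = w}"

text \<open>The pairing on basis elements: <1,G> = eps(G); <x y, z> = <y \<otimes> x, Delta z>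
(applied with x the first tree); <B+(x), y> = <x, gamma(y)>.\<close>

fun pair :: "forest \<Rightarrow> forest \<Rightarrow> 'a::field" where
  "pair [] G = (if G = [] then 1 else 0)"
| "pair [Node x] G = (case G of [] \<Rightarrow> 0 | t1 # G2 \<Rightarrow> if t1 = Node [] then pair x G2 else 0)"
| "pair (t # t' # F) G =
     (\<Sum>(G1, G2) \<in> wpairs (nvf G). delta G G1 G2 * pair (t' # F) G1 * pair [t] G2)"

text \<open>Elements of H are finitely supported coefficient functions on forests;
the pairing extended linearly in the first argument.\<close>
definition hpair :: "(forest \<Rightarrow> 'a::field) \<Rightarrow> forest \<Rightarrow> 'a" where
  "hpair x G = (\<Sum>H \<in> {H. x H \<noteq> 0}. x H * pair H G)"

definition is_dual_basis_elem :: "forest \<Rightarrow> (forest \<Rightarrow> 'a::field) \<Rightarrow> bool" where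
  "is_dual_basis_elem F x \<longleftrightarrow> finite {H. x H \<noteq> 0} \<and>
     (\<forall>G. hpair x G = (if G = F then 1 else 0))"

fun mf :: "forest \<Rightarrow> forest" where
  "mf [] = []"
| "mf (Node F1 # F2) = Node (mf F2) # mf F1"

text \<open>Admissible transformation: in some list of siblings (the roots of the forest,
or the children of some vertex r), a vertex u = Node (s # rest) loses its leftmost
child s, which is inserted immediately to the left of u.\<close>

inductive adm :: "forest \<Rightarrow> forest \<Rightarrow> bool" where
  here: "adm (A @ Node (s # rest) # B) (A @ s # Node rest # B)"
| inside: "adm C C' \<Longrightarrow> adm (A @ Node C # B) (A @ Node C' # B)"

definition forest_le :: "forest \<Rightarrow> forest \<Rightarrow> bool" where
  "forest_le F G \<longleftrightarrow> adm\<^sup>*\<^sup>* F G"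

definition mobius :: "'b set \<Rightarrow> ('b \<Rightarrow> 'b \<Rightarrow> bool) \<Rightarrow> 'b \<Rightarrow> 'b \<Rightarrow> 'a::field" where
  "mobius S le = (THE mu.
      (\<forall>x y. \<not> (x \<in> S \<and> y \<in> S \<and> le x y) \<longrightarrow> mu x y = 0) \<and>
      (\<forall>x\<in>S. \<forall>y\<in>S. le x y \<longrightarrow>
          (\<Sum>z \<in> {z \<in> S. le x z \<and> le z y}. mu x z) = (if x = y then 1 else 0)))"

end

theory Submission
  imports Defs
begin

lemma nvf_append[simp]: "nvf (X @ Y) = nvf X + nvf Y"
  by (induction X) auto

lemma nv_pos: "nv t > 0" by (cases t) auto

lemma nvf_zero_iff[simp]: "nvf X = 0 \<longleftrightarrow> X = []"
  by (cases X) (auto simp: nv_pos)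

lemma finite_nvf_le: "finite {F. nvf F \<le> k}"
proof (induction k)
  case 0
  then show ?case by (simp)
next
  case (Suc k)
  define T where "T = Node ` {C. nvf C \<le> k}"
  have fT: "finite T" using Suc by (simp add: T_def)
  have len: "length F \<le> nvf F" for F
    proof (induction F)
      case (Cons a F) then show ?case using nv_pos[of a] by simp
    qed simp
  have "{F. nvf F \<le> Suc k} \<subseteq> {xs. set xs \<subseteq> T \<and> length xs \<le> Suc k}"
  proof clarify
    fix F assume a: "nvf F \<le> Suc k"
    have "set F \<subseteq> T"
    proof
      fix t assume "t \<in> set F"
      then have "nv t \<le> nvf F" by (induction F) auto
      moreover obtain C where "t = Node C" by (cases t)
      ultimately show "t \<in> T" using a by (auto simp: T_def)
    qed
    then show "set F \<subseteq> T \<and> length F \<le> Suc k" using len[of F] a by auto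
  qed
  moreover have "finite {xs. set xs \<subseteq> T \<and> length xs \<le> Suc k}"
    using finite_lists_length_le[OF fT] by simp
  ultimately show ?case by (rule finite_subset)
qed

lemma finite_forests: "finite (forests n)"
  unfolding forests_def by (rule finite_subset[OF _ finite_nvf_le[of n]]) auto

lemma finite_wpairs: "finite (wpairs w)"
proof -
  have "wpairs w \<subseteq> {F. nvf F \<le> w} \<times> {F. nvf F \<le> w}" by (auto simp: wpairs_def)
  then show ?thesis using finite_nvf_le by (meson finite_SigmaI finite_subset)
qed


primrec dv :: "ptree \<Rightarrow> nat" and dvf :: "forest \<Rightarrow> nat" where
  "dv (Node F) = nvf F + dvf F"
| "dvf [] = 0"
| "dvf (t # F) = dv t + dvf F"

lemma dvf_append[simp]: "dvf (X @ Y) = dvf X + dvf Y"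
  by (induction X) auto

lemma adm_measure: "adm F G \<Longrightarrow> nvf G = nvf F \<and> dvf G < dvf F"
  by (induction rule: adm.induct) (auto simp: nv_pos)

lemma le_nvf: "forest_le F G \<Longrightarrow> nvf G = nvf F"
  unfolding forest_le_def by (induction rule: rtranclp_induct) (auto dest: adm_measure)

lemma le_dvf: "forest_le F G \<Longrightarrow> dvf G \<le> dvf F"
  unfolding forest_le_def by (induction rule: rtranclp_induct) (auto dest: adm_measure)

lemma le_dvf_strict: "forest_le F G \<Longrightarrow> F \<noteq> G \<Longrightarrow> dvf G < dvf F"
  unfolding forest_le_def
proof (induction rule: rtranclp_induct)
  case base then show ?case by simp
next
  case (step y z)
  have "dvf y \<le> dvf F" using step(1) le_dvf unfolding forest_le_def by blast
  then show ?case using adm_measure[OF step(2)] by auto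
qed

lemma le_refl[simp]: "forest_le F F" by (simp add: forest_le_def)

lemma le_trans: "forest_le F G \<Longrightarrow> forest_le G H \<Longrightarrow> forest_le F H"
  unfolding forest_le_def by auto

lemma le_antisym: "forest_le F G \<Longrightarrow> forest_le G F \<Longrightarrow> F = G"
  using le_dvf le_dvf_strict by fastforce

lemma adm_Nil: "adm [] G \<Longrightarrow> False"
  by (cases rule: adm.cases) auto

lemma le_Nil: "forest_le [] G \<Longrightarrow> G = []"
  using le_nvf by fastforce

lemma adm_prefix: "adm X Y \<Longrightarrow> adm (P @ X) (P @ Y)"
proof (induction rule: adm.induct)
  case (here A s rest B)
  then show ?case using adm.here[of "P @ A" s rest B] by simp
next
  case (inside C C' A B)
  then show ?case using adm.inside[of C C' "P @ A" B] by simp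
qed

lemma adm_suffix: "adm X Y \<Longrightarrow> adm (X @ P) (Y @ P)"
proof (induction rule: adm.induct)
  case (here A s rest B)
  then show ?case using adm.here[of "A" s rest "B @ P"] by simp
next
  case (inside C C' A B)
  then show ?case using adm.inside[of C C' "A" "B @ P"] by simp
qed

lemma le_prefix: "forest_le X Y \<Longrightarrow> forest_le (P @ X) (P @ Y)"
  unfolding forest_le_def
  by (induction rule: rtranclp_induct) (auto intro: rtranclp.rtrancl_into_rtrancl adm_prefix)

lemma le_suffix: "forest_le X Y \<Longrightarrow> forest_le (X @ P) (Y @ P)"
  unfolding forest_le_def
  by (induction rule: rtranclp_induct) (auto intro: rtranclp.rtrancl_into_rtrancl adm_suffix)

lemma le_append: "forest_le X X' \<Longrightarrow> forest_le Y Y' \<Longrightarrow> forest_le (X @ Y) (X' @ Y')"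
  by (meson le_prefix le_suffix le_trans)

lemma le_inside: "forest_le C C' \<Longrightarrow> forest_le [Node C] [Node C']"
  unfolding forest_le_def
  by (induction rule: rtranclp_induct) (auto intro: rtranclp.rtrancl_into_rtrancl adm.inside[of _ _ "[]" "[]", simplified])

lemma adm_append_cases:
  assumes "adm (X @ Y) Z"
  shows "(\<exists>X'. Z = X' @ Y \<and> adm X X') \<or> (\<exists>Y'. Z = X @ Y' \<and> adm Y Y')"
  using assms
proof (cases rule: adm.cases)
  case (here A s rest B)
  from here(1) obtain us where
    "(X = A @ us \<and> us @ Y = Node (s # rest) # B) \<or> (X @ us = A \<and> Y = us @ Node (s # rest) # B)"
    by (auto simp: append_eq_append_conv2)
  then show ?thesis
  proof
    assume h: "X = A @ us \<and> us @ Y = Node (s # rest) # B"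
    show ?thesis
    proof (cases us)
      case Nil
      then show ?thesis using h here(2) adm.here[of "[]" s rest B] by auto
    next
      case (Cons u us')
      then show ?thesis using h here(2) adm.here[of A s rest us'] by auto
    qed
  next
    assume h: "X @ us = A \<and> Y = us @ Node (s # rest) # B"
    then show ?thesis using here(2) adm.here[of us s rest B] by auto
  qed
next
  case (inside C C' A B)
  from inside(1) obtain us where
    "(X = A @ us \<and> us @ Y = Node C # B) \<or> (X @ us = A \<and> Y = us @ Node C # B)"
    by (auto simp: append_eq_append_conv2)
  then show ?thesis
  proof
    assume h: "X = A @ us \<and> us @ Y = Node C # B"
    show ?thesis
    proof (cases us)
      case Nil
      then show ?thesis using h inside adm.inside[of C C' "[]" B] by auto
    next
      case (Cons u us')
      then show ?thesis using h inside adm.inside[of C C' A us'] by auto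
    qed
  next
    assume h: "X @ us = A \<and> Y = us @ Node C # B"
    then show ?thesis using inside adm.inside[of C C' us B] by auto
  qed
qed

lemma le_append_inv:
  assumes "forest_le (X @ Y) Z"
  shows "\<exists>X' Y'. Z = X' @ Y' \<and> forest_le X X' \<and> forest_le Y Y'"
  using assms unfolding forest_le_def
proof (induction rule: rtranclp_induct)
  case base then show ?case by blast
next
  case (step Z1 Z2)
  then obtain X' Y' where h: "Z1 = X' @ Y'" "adm\<^sup>*\<^sup>* X X'" "adm\<^sup>*\<^sup>* Y Y'" by blast
  from adm_append_cases[of X' Y' Z2] step(2) h(1)
  have "(\<exists>X''. Z2 = X'' @ Y' \<and> adm X' X'') \<or> (\<exists>Y''. Z2 = X' @ Y'' \<and> adm Y' Y'')" by simp
  then show ?case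
  proof
    assume "\<exists>X''. Z2 = X'' @ Y' \<and> adm X' X''"
    then obtain X'' where "Z2 = X'' @ Y'" "adm X' X''" by blast
    then show ?case using h(2,3) rtranclp.rtrancl_into_rtrancl[OF h(2)] by blast
  next
    assume "\<exists>Y''. Z2 = X' @ Y'' \<and> adm Y' Y''"
    then obtain Y'' where "Z2 = X' @ Y''" "adm Y' Y''" by blast
    then show ?case using h(2,3) rtranclp.rtrancl_into_rtrancl[OF h(3)] by blast
  qed
qed

lemma pop_all: "forest_le [Node (P @ Q)] (P @ [Node Q])"
proof (induction P)
  case Nil then show ?case by simp
next
  case (Cons p P)
  have "adm [Node (p # P @ Q)] (p # [Node (P @ Q)])"
    using adm.here[of "[]" p "P @ Q" "[]"] by simp
  then have "forest_le [Node ((p # P) @ Q)] ([p] @ [Node (P @ Q)])" by (simp add: forest_le_def)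
  moreover have "forest_le ([p] @ [Node (P @ Q)]) ([p] @ (P @ [Node Q]))"
    using Cons le_prefix by blast
  ultimately show ?case using le_trans by simp
qed


lemma adm_single:
  assumes "adm [Node Q] Y"
  shows "(\<exists>s rest. Q = s # rest \<and> Y = [s, Node rest]) \<or> (\<exists>Q'. Y = [Node Q'] \<and> adm Q Q')"
  using assms
proof cases
  case (here A s rest B)
  then show ?thesis by (cases A) auto
next
  case (inside C C' A B)
  then show ?thesis by (cases A) auto
qed

lemma le_single_iff:
  "forest_le [Node C] Z \<longleftrightarrow> (\<exists>P Q. Z = P @ [Node Q] \<and> forest_le C (P @ Q))"
proof
  assume "forest_le [Node C] Z"
  then show "\<exists>P Q. Z = P @ [Node Q] \<and> forest_le C (P @ Q)"
    unfolding forest_le_def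
  proof (induction rule: rtranclp_induct)
    case base
    then show ?case by (rule exI[of _ "[]"]) (simp add: forest_le_def)
  next
    case (step Z1 Z2)
    from step(3) obtain P Q where h0: "Z1 = P @ [Node Q]" "adm\<^sup>*\<^sup>* C (P @ Q)" by (auto simp: forest_le_def)
    then have h: "Z1 = P @ [Node Q]" "forest_le C (P @ Q)" by (auto simp: forest_le_def)
    from adm_append_cases[of P "[Node Q]" Z2] step(2) h(1)
    have "(\<exists>X''. Z2 = X'' @ [Node Q] \<and> adm P X'') \<or> (\<exists>Y''. Z2 = P @ Y'' \<and> adm [Node Q] Y'')"
      by simp
    then show ?case
    proof
      assume "\<exists>X''. Z2 = X'' @ [Node Q] \<and> adm P X''"
      then obtain P' where p: "Z2 = P' @ [Node Q]" "adm P P'" by blast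
      then have "forest_le (P @ Q) (P' @ Q)"
        using le_suffix[of P P' Q] by (simp add: forest_le_def r_into_rtranclp)
      then have "forest_le C (P' @ Q)" using h(2) le_trans by blast
      then show ?case using p(1) by (auto simp: forest_le_def)
    next
      assume "\<exists>Y''. Z2 = P @ Y'' \<and> adm [Node Q] Y''"
      then obtain Y where y: "Z2 = P @ Y" "adm [Node Q] Y" by blast
      from adm_single[OF y(2)] show ?case
      proof
        assume "\<exists>s rest. Q = s # rest \<and> Y = [s, Node rest]"
        then obtain s rest where "Q = s # rest" "Y = [s, Node rest]" by blast
        then show ?case using y(1) h0(2) by (intro exI[of _ "P @ [s]"] exI[of _ rest]) simp
      next
        assume "\<exists>Q'. Y = [Node Q'] \<and> adm Q Q'"
        then obtain Q' where q: "Y = [Node Q']" "adm Q Q'" by blast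
        then have "forest_le (P @ Q) (P @ Q')"
          using le_prefix[of Q Q' P] by (simp add: forest_le_def r_into_rtranclp)
        then have "forest_le C (P @ Q')" using h(2) le_trans by blast
        then show ?case using q y(1) by (auto simp: forest_le_def)
      qed
    qed
  qed
next
  assume "\<exists>P Q. Z = P @ [Node Q] \<and> forest_le C (P @ Q)"
  then obtain P Q where "Z = P @ [Node Q]" "forest_le C (P @ Q)" by blast
  then show "forest_le [Node C] Z"
    using le_inside pop_all le_trans by blast
qed

lemma dec_iff:
  "forest_le (Node U # V) G \<longleftrightarrow>
     (\<exists>P Q V'. G = P @ Node Q # V' \<and> forest_le U (P @ Q) \<and> forest_le V V')"
proof
  assume "forest_le (Node U # V) G"
  then have "forest_le ([Node U] @ V) G" by simp
  from le_append_inv[OF this] obtain X' V' where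
    h: "G = X' @ V'" "forest_le [Node U] X'" "forest_le V V'" by blast
  from h(2) obtain P Q where "X' = P @ [Node Q]" "forest_le U (P @ Q)"
    using le_single_iff by blast
  then show "\<exists>P Q V'. G = P @ Node Q # V' \<and> forest_le U (P @ Q) \<and> forest_le V V'"
    using h by auto
next
  assume "\<exists>P Q V'. G = P @ Node Q # V' \<and> forest_le U (P @ Q) \<and> forest_le V V'"
  then obtain P Q V' where h: "G = P @ Node Q # V'" "forest_le U (P @ Q)" "forest_le V V'"
    by blast
  have "forest_le [Node U] (P @ [Node Q])" using h(2) le_single_iff by blast
  then have "forest_le ([Node U] @ V) ((P @ [Node Q]) @ V')" using h(3) le_append by blast
  then show "forest_le (Node U # V) G" using h(1) by simp
qed

lemma bullet_iff:
  "forest_le (Node [] # V) G \<longleftrightarrow> (\<exists>V'. G = Node [] # V' \<and> forest_le V V')"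
  unfolding dec_iff
proof
  assume "\<exists>P Q V'. G = P @ Node Q # V' \<and> forest_le [] (P @ Q) \<and> forest_le V V'"
  then obtain P Q V' where "G = P @ Node Q # V'" "forest_le [] (P @ Q)" "forest_le V V'" by blast
  moreover then have "P @ Q = []" using le_Nil by blast
  ultimately show "\<exists>V'. G = Node [] # V' \<and> forest_le V V'" by auto
next
  assume "\<exists>V'. G = Node [] # V' \<and> forest_le V V'"
  then show "\<exists>P Q V'. G = P @ Node Q # V' \<and> forest_le [] (P @ Q) \<and> forest_le V V'"
    by (metis append_Nil le_refl)
qed


lemma delta_nil_right: "(delta G A [] :: 'a::field) = (if A = G then 1 else 0)"
proof (induction G arbitrary: A)
  case Nil then show ?case by simp
next
  case (Cons t y)
  obtain x where t: "t = Node x" by (cases t)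
  show ?case
  proof (cases A)
    case Nil then show ?thesis using t by (cases y) simp_all
  next
    case (Cons a A')
    then show ?thesis using t Cons.IH by (cases y) (auto simp: Let_def)
  qed
qed


lemma suffix_cond: "(length y \<le> length Z \<and> drop (length Z - length y) Z = y) \<longleftrightarrow> (\<exists>W. Z = W @ y)"
  by (metis append_take_drop_id diff_diff_cancel drop_all length_append length_drop
      le_add2 append_eq_append_conv add_diff_cancel_right')

lemma suffix_take: "Z = W @ y \<Longrightarrow> take (length Z - length y) Z = W"
  by simp

lemma delta_cons_eq:
  "(delta (Node x # y) A B :: 'a::field) =
     (case A of [] \<Rightarrow> 0 | t' # A' \<Rightarrow> if t' = Node x then delta y A' B else 0)
   + (if \<exists>W. B = W @ y then
        (if A = [Node x] \<and> B = y then 1 else 0)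
       + (case take (length B - length y) B of [Node C] \<Rightarrow> delta x A C | _ \<Rightarrow> 0)
      else 0)
   - (if A = [Node x] \<and> B = y then 1 else 0)"
proof -
  have "(length y \<le> length B \<and> drop (length B - length y) B = y) \<longleftrightarrow> (\<exists>W. B = W @ y)"
    by (rule suffix_cond)
  moreover have "(\<exists>W. B = W @ y) \<Longrightarrow> (take (length B - length y) B = []) = (B = y)"
    by auto
  ultimately show ?thesis by (auto simp: Let_def)
qed

lemma delta_bullet:
  "(delta G A (Node [] # B) :: 'a::field) =
     (if \<exists>P Q. G = P @ Node Q # B \<and> A = P @ Q then 1 else 0)"
proof (induction G arbitrary: A)
  case Nil then show ?case by simp
next
  case (Cons t y)
  obtain x where t: "t = Node x" by (cases t)
  define T1 :: 'a where "T1 = (case A of [] \<Rightarrow> 0 | t' # A' \<Rightarrow> if t' = Node x then delta y A' (Node [] # B) else 0)"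
  have T1: "T1 = (if \<exists>P Q. A = Node x # P @ Q \<and> y = P @ Node Q # B then 1 else 0)"
    unfolding T1_def by (cases A) (auto simp: Cons.IH)
  show ?case
  proof (cases "Node [] # B = y")
    case True
    then have "(delta (Node x # y) A (Node [] # B) :: 'a) = T1"
      unfolding T1_def delta_cons_eq by auto
    then show ?thesis using True t T1 
      by (auto simp: Cons_eq_append_conv append_eq_Cons_conv)
  next
    case False
    show ?thesis
    proof (cases "B = y")
      case True
      then have "(delta (Node x # y) A (Node [] # B) :: 'a) = T1 + delta x A []"
        unfolding T1_def delta_cons_eq by auto
      moreover have "\<not> (\<exists>P Q. A = Node x # P @ Q \<and> y = P @ Node Q # B)"
        using True by (auto dest: arg_cong[of _ _ length])
      moreover have "(delta x A [] :: 'a) = (if A = x then 1 else 0)" by (rule delta_nil_right)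
      ultimately show ?thesis using True t T1
        by (auto simp: Cons_eq_append_conv append_eq_Cons_conv)
    next
      case False2: False
      have w: "W \<noteq> [] \<and> (\<forall>C. W \<noteq> [Node C])" if "Node [] # B = W @ y" for W
        using that False False2 by (cases W) auto
      have "(case take (length (Node [] # B) - length y) (Node [] # B) of [Node C] \<Rightarrow> (delta x A C :: 'a) | _ \<Rightarrow> 0) = 0"
        if "Node [] # B = W @ y" for W
        using w[OF that] by (subst that)+ (auto split: list.split ptree.split)
      then have c0: "(case take (length (Node [] # B) - length y) (Node [] # B) of [Node C] \<Rightarrow> (delta x A C :: 'a) | _ \<Rightarrow> 0) = 0"
        if "\<exists>W. Node [] # B = W @ y" using that by blast
      have "(delta (Node x # y) A (Node [] # B) :: 'a) = T1"
        unfolding T1_def delta_cons_eq using False False2 c0 by auto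
      then show ?thesis using False2 t T1 
        by (auto simp: Cons_eq_append_conv append_eq_Cons_conv)
    qed
  qed
qed


lemma decomp_unique:
  assumes "P1 @ Node Q1 # V1 = P2 @ Node Q2 # V2" "nvf V1 = nvf V2"
  shows "P1 = P2 \<and> Q1 = Q2 \<and> V1 = V2"
proof -
  from assms(1) obtain us where
    "(P1 = P2 @ us \<and> us @ Node Q1 # V1 = Node Q2 # V2) \<or> (P1 @ us = P2 \<and> Node Q1 # V1 = us @ Node Q2 # V2)"
    by (auto simp: append_eq_append_conv2)
  then show ?thesis
  proof
    assume h: "P1 = P2 @ us \<and> us @ Node Q1 # V1 = Node Q2 # V2"
    show ?thesis
    proof (cases us)
      case Nil then show ?thesis using h by simp
    next
      case (Cons u us')
      then have "V2 = us' @ Node Q1 # V1" using h by simp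
      then have "nvf V2 > nvf V1" by (simp add: nv_pos)
      then show ?thesis using assms(2) by simp
    qed
  next
    assume h: "P1 @ us = P2 \<and> Node Q1 # V1 = us @ Node Q2 # V2"
    show ?thesis
    proof (cases us)
      case Nil then show ?thesis using h by simp
    next
      case (Cons u us')
      then have "V1 = us' @ Node Q2 # V2" using h by simp
      then have "nvf V1 > nvf V2" by (simp add: nv_pos)
      then show ?thesis using assms(2) by simp
    qed
  qed
qed

lemma le_Nil_iff: "forest_le [] G \<longleftrightarrow> G = []"
  using le_Nil by auto

lemma pair_zeta: "(pair H G :: 'a::field) = (if forest_le (mf H) G then 1 else 0)"
proof (induction H arbitrary: G rule: measure_induct_rule[of nvf])
  case (less H)
  show ?case
  proof (cases H)
    case Nil
    then show ?thesis by (simp add: le_Nil_iff)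
  next
    case (Cons t H')
    obtain X where t: "t = Node X" by (cases t)
    show ?thesis
    proof (cases H')
      case Nil
      have ih: "(pair X G2 :: 'a) = (if forest_le (mf X) G2 then 1 else 0)" for G2
        using less.IH[of X] Cons t Nil by simp
      show ?thesis using Cons t Nil
        by (cases G) (auto simp: ih bullet_iff)
    next
      case Cons2: (Cons t' F)
      define U where "U = mf H'"
      define V where "V = mf X"
      have mfH: "mf H = Node U # V" using Cons t U_def V_def by simp
      have ih1: "(pair H' G1 :: 'a) = (if forest_le U G1 then 1 else 0)" for G1
        using less.IH[of H'] Cons U_def by (simp add: nv_pos)
      have ih2: "(pair [Node X] G2 :: 'a) = (if forest_le (Node [] # V) G2 then 1 else 0)" for G2
        using less.IH[of "[Node X]"] Cons Cons2 t V_def by (simp add: nv_pos)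
      define T where "T = {(G1, G2). \<exists>P Q V'. G = P @ Node Q # V' \<and> G1 = P @ Q \<and>
                         G2 = Node [] # V' \<and> forest_le U G1 \<and> forest_le V V'}"
      have f: "(delta G G1 G2 :: 'a) * pair H' G1 * pair [Node X] G2 = (if (G1, G2) \<in> T then 1 else 0)"
        for G1 G2
      proof (cases "\<exists>V'. G2 = Node [] # V' \<and> forest_le V V'")
        case True
        then obtain V' where v: "G2 = Node [] # V'" "forest_le V V'" by blast
        show ?thesis unfolding ih1 ih2 using v
          by (auto simp: bullet_iff delta_bullet T_def)
      next
        case False
        then show ?thesis unfolding ih1 ih2 
          by (auto simp: bullet_iff T_def)
      qed
      have "(pair H G :: 'a) = (\<Sum>(G1, G2) \<in> wpairs (nvf G). (delta G G1 G2 :: 'a) * pair H' G1 * pair [Node X] G2)"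
        using Cons Cons2 t by simp
      also have "\<dots> = (\<Sum>p \<in> wpairs (nvf G). if p \<in> T then 1 else 0)"
        by (rule sum.cong) (auto simp del: pair.simps simp: f)
      also have "\<dots> = (if forest_le (mf H) G then 1 else 0)"
      proof (cases "T = {}")
        case True
        then have "\<not> forest_le (mf H) G" unfolding mfH dec_iff T_def by auto
        then show ?thesis using True by simp
      next
        case False
        then obtain p where p: "p \<in> T" by blast
        have Tp: "T = {p}"
        proof
          show "T \<subseteq> {p}"
          proof
            fix q assume q: "q \<in> T"
            from p obtain P1 Q1 V1 where h1: "G = P1 @ Node Q1 # V1" "p = (P1 @ Q1, Node [] # V1)" "forest_le V V1"
              unfolding T_def by auto
            from q obtain P2 Q2 V2 where h2: "G = P2 @ Node Q2 # V2" "q = (P2 @ Q2, Node [] # V2)" "forest_le V V2"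
              unfolding T_def by auto
            have "nvf V1 = nvf V2" using h1(3) h2(3) le_nvf by metis
            then show "q \<in> {p}" using decomp_unique[of P1 Q1 V1 P2 Q2 V2] h1 h2 by auto
          qed
        qed (use p in auto)
        have "p \<in> wpairs (nvf G)" using p unfolding T_def wpairs_def by auto
        moreover have "forest_le (mf H) G" using p unfolding mfH dec_iff T_def by auto
        ultimately show ?thesis unfolding Tp by (simp add: sum.delta' finite_wpairs)
      qed
      finally show ?thesis .
    qed
  qed
qed


datatype bt = Lf | Bn bt bt

fun phi :: "forest \<Rightarrow> bt" where
  "phi [] = Lf"
| "phi (Node c # r) = Bn (phi c) (phi r)"

fun psi :: "bt \<Rightarrow> forest" where
  "psi Lf = []"
| "psi (Bn l r) = Node (psi l) # psi r"

lemma psi_phi[simp]: "psi (phi F) = F"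
  by (induction F rule: phi.induct) auto

fun mir :: "bt \<Rightarrow> bt" where
  "mir Lf = Lf"
| "mir (Bn l r) = Bn (mir r) (mir l)"

lemma phi_mf: "phi (mf F) = mir (phi F)"
  by (induction F rule: mf.induct) auto

lemma mir_mir[simp]: "mir (mir t) = t"
  by (induction t) auto

lemma mf_mf[simp]: "mf (mf F) = F"
  by (metis phi_mf mir_mir psi_phi)

lemma nvf_mf[simp]: "nvf (mf F) = nvf F"
  by (induction F rule: mf.induct) auto

inductive rot :: "bt \<Rightarrow> bt \<Rightarrow> bool" where
  root: "rot (Bn (Bn a b) c) (Bn a (Bn b c))"
| left: "rot a a' \<Longrightarrow> rot (Bn a c) (Bn a' c)"
| right: "rot c c' \<Longrightarrow> rot (Bn a c) (Bn a c')"

lemma rot_prefix: "rot (phi X) (phi Y) \<Longrightarrow> rot (phi (A @ X)) (phi (A @ Y))"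
proof (induction A)
  case Nil then show ?case by simp
next
  case (Cons t A)
  obtain c where "t = Node c" by (cases t)
  then show ?case using Cons by (auto intro: rot.right)
qed

lemma adm_rot: "adm F G \<Longrightarrow> rot (phi F) (phi G)"
proof (induction rule: adm.induct)
  case (here A s rest B)
  obtain S where s: "s = Node S" by (cases s)
  have "rot (phi (Node (s # rest) # B)) (phi (s # Node rest # B))"
    using s by (auto intro: rot.root)
  then show ?case by (rule rot_prefix)
next
  case (inside C C' A B)
  then have "rot (phi (Node C # B)) (phi (Node C' # B))" by (auto intro: rot.left)
  then show ?case by (rule rot_prefix)
qed

lemma rot_adm: "rot a b \<Longrightarrow> adm (psi a) (psi b)"
proof (induction rule: rot.induct)
  case (root a b c)
  then show ?case using adm.here[of "[]" "Node (psi a)" "psi b" "psi c"] by simp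
next
  case (left a a' c)
  then show ?case using adm.inside[of "psi a" "psi a'" "[]" "psi c"] by simp
next
  case (right c c' a)
  then show ?case using adm_prefix[of "psi c" "psi c'" "[Node (psi a)]"] by simp
qed

lemma rot_mir: "rot a b \<Longrightarrow> rot (mir b) (mir a)"
  by (induction rule: rot.induct) (auto intro: rot.intros)

lemma adm_mf: "adm F G \<Longrightarrow> adm (mf G) (mf F)"
proof -
  assume "adm F G"
  then have "rot (mir (phi G)) (mir (phi F))" using adm_rot rot_mir by blast
  then have "adm (psi (phi (mf G))) (psi (phi (mf F)))" unfolding phi_mf by (rule rot_adm)
  then show ?thesis by simp
qed

lemma le_mf: "forest_le F G \<Longrightarrow> forest_le (mf G) (mf F)"
  unfolding forest_le_def
  by (induction rule: rtranclp_induct) (auto intro: rtranclp.rtrancl_into_rtrancl converse_rtranclp_into_rtranclp adm_mf)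

lemma le_mf_swap: "forest_le (mf H) G \<longleftrightarrow> forest_le (mf G) H"
  by (metis le_mf mf_mf)


function mu :: "nat \<Rightarrow> forest \<Rightarrow> forest \<Rightarrow> 'a::field" where
  "mu n x y = (if x \<in> forests n \<and> y \<in> forests n \<and> forest_le x y then
      (if x = y then 1 else - (\<Sum>z\<in>{z \<in> forests n. forest_le x z \<and> forest_le z y \<and> z \<noteq> y}. mu n x z))
     else 0)"
  by auto
termination
proof (relation "measure (\<lambda>(n, x, y). dvf x - dvf y)")
  fix n x y z
  assume "x \<in> forests n \<and> y \<in> forests n \<and> forest_le x y" "x \<noteq> y"
    "z \<in> {z \<in> forests n. forest_le x z \<and> forest_le z y \<and> z \<noteq> y}"
  then have "dvf y < dvf z" "dvf z \<le> dvf x" using le_dvf le_dvf_strict by auto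
  then show "((n, x, z), n, x, y) \<in> measure (\<lambda>(n, x, y). dvf x - dvf y)" by auto
qed auto

function nu :: "nat \<Rightarrow> forest \<Rightarrow> forest \<Rightarrow> 'a::field" where
  "nu n x y = (if x \<in> forests n \<and> y \<in> forests n \<and> forest_le x y then
      (if x = y then 1 else - (\<Sum>z\<in>{z \<in> forests n. forest_le x z \<and> forest_le z y \<and> z \<noteq> x}. nu n z y))
     else 0)"
  by auto
termination
proof (relation "measure (\<lambda>(n, x, y). dvf x - dvf y)")
  fix n x y z
  assume "x \<in> forests n \<and> y \<in> forests n \<and> forest_le x y" "x \<noteq> y"
    "z \<in> {z \<in> forests n. forest_le x z \<and> forest_le z y \<and> z \<noteq> x}"
  then have "dvf z < dvf x" "dvf y \<le> dvf z" using le_dvf le_dvf_strict by auto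
  then show "((n, z, y), n, x, y) \<in> measure (\<lambda>(n, x, y). dvf x - dvf y)" by auto
qed auto

declare mu.simps[simp del] nu.simps[simp del]

definition zeta :: "forest \<Rightarrow> forest \<Rightarrow> 'a::field" where
  "zeta a b = (if forest_le a b then 1 else 0)"

lemma interval_split:
  assumes "x \<in> forests n" "y \<in> forests n" "forest_le x y"
  shows "{z \<in> forests n. forest_le x z \<and> forest_le z y} = insert y {z \<in> forests n. forest_le x z \<and> forest_le z y \<and> z \<noteq> y}"
    "{z \<in> forests n. forest_le x z \<and> forest_le z y} = insert x {z \<in> forests n. forest_le x z \<and> forest_le z y \<and> z \<noteq> x}"
  using assms by auto

lemma finite_interval: "finite {z \<in> forests n. P z}"
  using finite_forests by auto

lemma mu_left:
  assumes "x \<in> forests n" "y \<in> forests n" "forest_le x y"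
  shows "(\<Sum>z\<in>{z \<in> forests n. forest_le x z \<and> forest_le z y}. (mu n x z :: 'a::field)) = (if x = y then 1 else 0)"
proof (cases "x = y")
  case True
  then have e: "{z \<in> forests n. forest_le x z \<and> forest_le z y} = {x}" using assms le_antisym by auto
  have "(mu n x x :: 'a) = 1" using assms(1) by (subst mu.simps) simp
  then show ?thesis using True e by simp
next
  case False
  have eq: "(mu n x y :: 'a) = - (\<Sum>z\<in>{z \<in> forests n. forest_le x z \<and> forest_le z y \<and> z \<noteq> y}. mu n x z)"
    using assms False by (subst mu.simps) simp
  show ?thesis unfolding interval_split(1)[OF assms]
    by (subst sum.insert) (use assms False finite_interval eq in auto)
qed

lemma nu_right:
  assumes "x \<in> forests n" "y \<in> forests n" "forest_le x y"
  shows "(\<Sum>z\<in>{z \<in> forests n. forest_le x z \<and> forest_le z y}. (nu n z y :: 'a::field)) = (if x = y then 1 else 0)"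
proof (cases "x = y")
  case True
  then have e: "{z \<in> forests n. forest_le x z \<and> forest_le z y} = {x}" using assms le_antisym by auto
  have "(nu n x x :: 'a) = 1" using assms(1) by (subst nu.simps) simp
  then show ?thesis using True e by simp
next
  case False
  have eq: "(nu n x y :: 'a) = - (\<Sum>z\<in>{z \<in> forests n. forest_le x z \<and> forest_le z y \<and> z \<noteq> x}. nu n z y)"
    using assms False by (subst nu.simps) simp
  show ?thesis unfolding interval_split(2)[OF assms]
    by (subst sum.insert) (use assms False finite_interval eq in auto)
qed

lemma nu_supp:
  assumes "\<not> (x \<in> forests n \<and> y \<in> forests n \<and> forest_le x y)" shows "nu n x y = 0"
  by (subst nu.simps) (rule if_not_P[OF assms])

lemma mu_supp:
  assumes "\<not> (x \<in> forests n \<and> y \<in> forests n \<and> forest_le x y)" shows "mu n x y = 0"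
  by (subst mu.simps) (rule if_not_P[OF assms])

definition mobP :: "nat \<Rightarrow> (forest \<Rightarrow> forest \<Rightarrow> 'a::field) \<Rightarrow> bool" where
  "mobP n m \<longleftrightarrow> (\<forall>x y. \<not> (x \<in> forests n \<and> y \<in> forests n \<and> forest_le x y) \<longrightarrow> m x y = 0) \<and>
      (\<forall>x\<in>forests n. \<forall>y\<in>forests n. forest_le x y \<longrightarrow>
          (\<Sum>z \<in> {z \<in> forests n. forest_le x z \<and> forest_le z y}. m x z) = (if x = y then 1 else 0))"

lemma full_sum:
  assumes "\<And>z. \<not> forest_le x z \<Longrightarrow> f z = 0"
  shows "(\<Sum>z\<in>forests n. f z * zeta z y) = (\<Sum>z \<in> {z \<in> forests n. forest_le x z \<and> forest_le z y}. f z)"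
proof -
  have "(\<Sum>z\<in>forests n. f z * zeta z y) = (\<Sum>z\<in>{z \<in> forests n. forest_le x z \<and> forest_le z y}. f z * zeta z y)"
    by (rule sum.mono_neutral_right) (use finite_forests assms in \<open>auto simp: zeta_def\<close>)
  also have "\<dots> = (\<Sum>z \<in> {z \<in> forests n. forest_le x z \<and> forest_le z y}. f z)"
    by (rule sum.cong) (auto simp: zeta_def)
  finally show ?thesis .
qed

lemma full_sum2:
  assumes "\<And>z. \<not> forest_le z y \<Longrightarrow> f z = 0"
  shows "(\<Sum>z\<in>forests n. zeta x z * f z) = (\<Sum>z \<in> {z \<in> forests n. forest_le x z \<and> forest_le z y}. f z)"
proof -
  have "(\<Sum>z\<in>forests n. zeta x z * f z) = (\<Sum>z\<in>{z \<in> forests n. forest_le x z \<and> forest_le z y}. zeta x z * f z)"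
    by (rule sum.mono_neutral_right) (use finite_forests assms in \<open>auto simp: zeta_def\<close>)
  also have "\<dots> = (\<Sum>z \<in> {z \<in> forests n. forest_le x z \<and> forest_le z y}. f z)"
    by (rule sum.cong) (auto simp: zeta_def)
  finally show ?thesis .
qed

lemma left_full:
  assumes "mobP n m" "x \<in> forests n" "y \<in> forests n"
  shows "(\<Sum>z\<in>forests n. m x z * zeta z y) = (if x = y then 1 else 0)"
proof -
  have s: "(\<Sum>z\<in>forests n. m x z * zeta z y) = (\<Sum>z \<in> {z \<in> forests n. forest_le x z \<and> forest_le z y}. m x z)"
    by (rule full_sum) (use assms(1) in \<open>auto simp: mobP_def\<close>)
  show ?thesis
  proof (cases "forest_le x y")
    case True
    then show ?thesis using s assms unfolding mobP_def by auto
  next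
    case False
    then have e: "{z \<in> forests n. forest_le x z \<and> forest_le z y} = {}" using le_trans by blast
    show ?thesis using s[unfolded e] False by auto
  qed
qed

lemma nu_full:
  assumes "x \<in> forests n" "y \<in> forests n"
  shows "(\<Sum>z\<in>forests n. zeta x z * (nu n z y :: 'a::field)) = (if x = y then 1 else 0)"
proof -
  have s: "(\<Sum>z\<in>forests n. zeta x z * (nu n z y :: 'a)) = (\<Sum>z \<in> {z \<in> forests n. forest_le x z \<and> forest_le z y}. nu n z y)"
    by (rule full_sum2) (auto simp: nu_supp)
  show ?thesis
  proof (cases "forest_le x y")
    case True
    then show ?thesis using s nu_right[OF assms True] by simp
  next
    case False
    then have e: "{z \<in> forests n. forest_le x z \<and> forest_le z y} = {}" using le_trans by blast
    show ?thesis using s[unfolded e] False by auto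
  qed
qed

lemma mobP_eq_nu:
  assumes "mobP n m"
  shows "m = nu n"
proof (intro ext)
  fix x y
  show "m x y = nu n x y"
  proof (cases "x \<in> forests n \<and> y \<in> forests n")
    case False
    then show ?thesis using assms nu_supp unfolding mobP_def by metis
  next
    case True
    have "(\<Sum>w\<in>forests n. m x w * (if w = y then 1 else 0)) = (\<Sum>w\<in>forests n. if w = y then m x w else 0)"
      by (rule sum.cong) auto
    then have "m x y = (\<Sum>w\<in>forests n. m x w * (if w = y then 1 else 0))"
      using True finite_forests by (simp add: sum.delta')
    also have "\<dots> = (\<Sum>w\<in>forests n. m x w * (\<Sum>z\<in>forests n. zeta w z * nu n z y))"
      by (rule sum.cong[OF refl]) (simp add: nu_full[of _ n y] True)
    also have "\<dots> = (\<Sum>w\<in>forests n. \<Sum>z\<in>forests n. m x w * zeta w z * nu n z y)"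
      by (simp add: sum_distrib_left mult.assoc)
    also have "\<dots> = (\<Sum>z\<in>forests n. \<Sum>w\<in>forests n. m x w * zeta w z * nu n z y)"
      by (rule sum.swap)
    also have "\<dots> = (\<Sum>z\<in>forests n. (\<Sum>w\<in>forests n. m x w * zeta w z) * nu n z y)"
      by (simp add: sum_distrib_right)
    also have "\<dots> = (\<Sum>z\<in>forests n. (if x = z then 1 else 0) * nu n z y)"
      by (rule sum.cong[OF refl]) (simp add: left_full[OF assms(1) True[THEN conjunct1]])
    also have "\<dots> = (\<Sum>z\<in>forests n. if x = z then nu n z y else 0)"
      by (rule sum.cong) auto
    also have "\<dots> = nu n x y"
      using True finite_forests by (simp add: sum.delta)
    finally show ?thesis .
  qed
qed

lemma mobP_mu: "mobP n (mu n)"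
  unfolding mobP_def using mu_supp mu_left by blast

lemma mobius_eq: "mobius (forests n) forest_le = (nu n :: forest \<Rightarrow> forest \<Rightarrow> 'a::field)"
proof -
  have "(mobius (forests n) forest_le :: forest \<Rightarrow> forest \<Rightarrow> 'a) = (THE m. mobP n m)"
    unfolding mobius_def mobP_def by simp
  also have "\<dots> = nu n"
  proof (rule the_equality)
    show "mobP n (nu n :: forest \<Rightarrow> forest \<Rightarrow> 'a)" using mobP_mu mobP_eq_nu by metis
  next
    fix m :: "forest \<Rightarrow> forest \<Rightarrow> 'a" assume "mobP n m" then show "m = nu n" by (rule mobP_eq_nu)
  qed
  finally show ?thesis .
qed


theorem corollary39:
  fixes n :: nat and F :: forest
  assumes "F \<in> forests n"
  shows "is_dual_basis_elem F
     (\<lambda>G. if G \<in> forests n \<and> forest_le G (mf F)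
           then (mobius (forests n) forest_le G (mf F) :: 'a::field) else 0)"
proof -
  define y where "y = mf F"
  have yS: "y \<in> forests n" using assms by (simp add: y_def forests_def)
  have xeq: "(\<lambda>G. if G \<in> forests n \<and> forest_le G (mf F)
           then (mobius (forests n) forest_le G (mf F) :: 'a::field) else 0) = (\<lambda>G. nu n G y)"
    using yS by (auto simp: mobius_eq y_def nu_supp)
  have supp: "{H. (nu n H y :: 'a) \<noteq> 0} \<subseteq> forests n"
    using nu_supp by blast
  have fin: "finite {H. (nu n H y :: 'a) \<noteq> 0}"
    using supp finite_forests finite_subset by blast
  have hp: "hpair (\<lambda>G. nu n G y) G = (if G = F then 1 else (0 :: 'a))" for G
  proof -
    have "hpair (\<lambda>G. nu n G y) G = (\<Sum>H\<in>{H. (nu n H y :: 'a) \<noteq> 0}. nu n H y * (pair H G :: 'a))"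
      unfolding hpair_def by (rule refl)
    also have "\<dots> = (\<Sum>H\<in>forests n. nu n H y * pair H G)"
      by (rule sum.mono_neutral_left) (use supp finite_forests in auto)
    also have "\<dots> = (\<Sum>H\<in>forests n. zeta (mf G) H * nu n H y)"
      by (rule sum.cong[OF refl]) (simp add: pair_zeta le_mf_swap zeta_def)
    also have "\<dots> = (if G = F then 1 else 0)"
    proof (cases "G \<in> forests n")
      case True
      then have "mf G \<in> forests n" by (simp add: forests_def)
      then have "(\<Sum>H\<in>forests n. zeta (mf G) H * nu n H y) = (if mf G = y then 1 else (0 :: 'a))"
        using nu_full yS by blast
      moreover have "(mf G = y) = (G = F)" unfolding y_def by (metis mf_mf)
      ultimately show ?thesis by simp
    next
      case False
      have "zeta (mf G) H = (0 :: 'a)" if "H \<in> forests n" for H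
        using False that le_nvf[of "mf G" H] by (auto simp: zeta_def forests_def)
      then show ?thesis using False assms by auto
    qed
    finally show ?thesis .
  qed
  show ?thesis unfolding xeq is_dual_basis_elem_def using fin hp by blast
qed

end
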